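(* Let $T_1,\dots,T_m$ be conjunctions over variables $x_1,\dots,x_n$, presented online, each of which is the union of some subset of metafeatures $m_1,\dots,m_k$ satisfying the anchor-variable condition. Consider the following online procedure (Algorithm 4): initialize $\mathrm{TS}=\emptyset$ and $\tilde M=\emptyset$; for $r=1,\dots,m$, if $T_r$ is not equal to the union of the metafeatures in $\tilde M$ contained in $T_r$, then ("learning $T_r$ from scratch") append $T_r$ to $\mathrm{TS}$ and replace $\tilde M$ by the output of Algorithm 3 run on $\mathrm{TS}$. Then the number of targets learned from scratch (appended to $\mathrm{TS}$) is at most $n^2+k$.
   Context: A conjunction/monomial is identified with its set of variables. Metafeatures $m_1,\dots,m_k$ satisfy the anchor-variable condition if each $m_i$ contains a variable $y_i$ belonging to no other $m_j$. For a variable $z$, $N(\mathrm{TS},z)$ is the set of conjunctions in $\mathrm{TS}$ containing $z$. Algorithm 3, on an ordered list $\mathrm{TS}$ of conjunctions: start with no hypothesized metafeatures; for a conjunction $T$ let $h(T)$ be the union of all hypothesized metafeatures produced so far contained in $T$; while some $T\in\mathrm{TS}$ has $T\ne h(T)$, take the least-index such $T$, choose $z\in T\setminus h(T)$ minimal in the sense that no $z'\in T\setminus h(T)$ has $N(\mathrm{TS},z')\subsetneq N(\mathrm{TS},z)$ (ties broken by least variable index), and add the metafeature $\bigcap_{T'\in\mathrm{TS},\,z\in T'}T'$. Output all metafeatures produced. *)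

theory Defs
  imports Main "HOL-Library.While_Combinator"
begin

text \<open>Conjunctions / monomials are identified with their sets of variables
(variables are natural numbers; the variables x_1..x_n are 0..n-1).\<close>

definition anchor_condition :: "(nat \<Rightarrow> nat set) \<Rightarrow> nat \<Rightarrow> bool" where
  "anchor_condition M k \<longleftrightarrow>
     (\<forall>i<k. \<exists>y\<in>M i. \<forall>j<k. j \<noteq> i \<longrightarrow> y \<notin> M j)"

definition hyp_union :: "nat set set \<Rightarrow> nat set \<Rightarrow> nat set" where
  "hyp_union H T = \<Union>{m \<in> H. m \<subseteq> T}"

definition nbhd :: "nat set list \<Rightarrow> nat \<Rightarrow> nat set set" where
  "nbhd TS z = {T' \<in> set TS. z \<in> T'}"

definition alg3_step :: "nat set list \<Rightarrow> nat set set \<Rightarrow> nat set set" where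
  "alg3_step TS H =
     (let T = hd (filter (\<lambda>T. T \<noteq> hyp_union H T) TS);
          D = T - hyp_union H T;
          z = (LEAST z. z \<in> D \<and> \<not> (\<exists>z'\<in>D. nbhd TS z' \<subset> nbhd TS z))
      in insert (\<Inter>{T' \<in> set TS. z \<in> T'}) H)"

definition alg3 :: "nat set list \<Rightarrow> nat set set" where
  "alg3 TS = while (\<lambda>H. \<exists>T\<in>set TS. T \<noteq> hyp_union H T) (alg3_step TS) {}"

definition alg4_round :: "nat set list \<times> nat set set \<Rightarrow> nat set \<Rightarrow> nat set list \<times> nat set set" where
  "alg4_round st T =
     (let (TS, Mt) = st in
      if T \<noteq> hyp_union Mt T then (TS @ [T], alg3 (TS @ [T])) else (TS, Mt))"

definition alg4 :: "nat set list \<Rightarrow> nat set list \<times> nat set set" where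
  "alg4 Ts = foldl alg4_round ([], {}) Ts"

end

theory Submission
  imports Defs
begin

definition clo :: "nat set list \<Rightarrow> nat \<Rightarrow> nat set" where
  "clo TS z = \<Inter>{T' \<in> set TS. z \<in> T'}"

lemma hyp_union_sub: "hyp_union H T \<subseteq> T"
  by (auto simp: hyp_union_def)

lemma hyp_union_mono: "H \<subseteq> H' \<Longrightarrow> hyp_union H T \<subseteq> hyp_union H' T"
  by (auto simp: hyp_union_def)

lemma alg3_step_props:
  assumes fin: "\<forall>T\<in>set TS. finite T"
    and b: "\<exists>T\<in>set TS. T \<noteq> hyp_union H T"
  shows "\<exists>z. alg3_step TS H = insert (clo TS z) H \<and>
           (\<exists>T0\<in>set TS. z \<in> T0 - hyp_union H T0 \<and> clo TS z \<subseteq> T0)"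
proof -
  define T0 where "T0 = hd (filter (\<lambda>T. T \<noteq> hyp_union H T) TS)"
  have ne: "filter (\<lambda>T. T \<noteq> hyp_union H T) TS \<noteq> []"
    using b by (auto simp: filter_empty_conv)
  have "T0 \<in> set (filter (\<lambda>T. T \<noteq> hyp_union H T) TS)"
    unfolding T0_def using ne by (rule hd_in_set)
  hence T0: "T0 \<in> set TS" "T0 \<noteq> hyp_union H T0" by auto
  define D where "D = T0 - hyp_union H T0"
  have "D \<noteq> {}" using T0(2) hyp_union_sub[of H T0] unfolding D_def by blast
  then obtain z0 where "z0 \<in> D" by blast
  then obtain z1 where z1: "z1 \<in> D" "\<forall>y. y \<in> D \<longrightarrow> card (nbhd TS z1) \<le> card (nbhd TS y)"
    using ex_has_least_nat[of "\<lambda>z. z \<in> D" z0 "\<lambda>z. card (nbhd TS z)"] by blast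
  have finN: "\<And>z. finite (nbhd TS z)" by (simp add: nbhd_def)
  have Q1: "z1 \<in> D \<and> \<not> (\<exists>z'\<in>D. nbhd TS z' \<subset> nbhd TS z1)"
    using z1 psubset_card_mono[OF finN] by (meson leD)
  define z where "z = (LEAST z. z \<in> D \<and> \<not> (\<exists>z'\<in>D. nbhd TS z' \<subset> nbhd TS z))"
  have Qz: "z \<in> D \<and> \<not> (\<exists>z'\<in>D. nbhd TS z' \<subset> nbhd TS z)"
    unfolding z_def by (rule LeastI[of _ z1], rule Q1)
  have eq: "alg3_step TS H = insert (clo TS z) H"
    unfolding alg3_step_def Let_def T0_def[symmetric] D_def[symmetric] z_def[symmetric] clo_def ..
  have "clo TS z \<subseteq> T0" using Qz T0(1) unfolding D_def clo_def by blast
  thus ?thesis using eq Qz T0(1) unfolding D_def by blast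
qed

lemma alg3_props:
  assumes fin: "\<forall>T\<in>set TS. finite T"
  shows "(\<forall>T\<in>set TS. T = hyp_union (alg3 TS) T) \<and> (\<forall>m\<in>alg3 TS. \<exists>z. m = clo TS z)"
  unfolding alg3_def
proof (rule while_rule[where P = "\<lambda>H. \<forall>m\<in>H. \<exists>z. m = clo TS z"
      and r = "measure (\<lambda>H. card (Sigma (set TS) (\<lambda>T. T - hyp_union H T)))"])
  show "\<forall>m\<in>{}. \<exists>z. m = clo TS z" by simp
next
  fix H assume P: "\<forall>m\<in>H. \<exists>z. m = clo TS z"
    and b: "\<exists>T\<in>set TS. T \<noteq> hyp_union H T"
  from alg3_step_props[OF fin b] show "\<forall>m\<in>alg3_step TS H. \<exists>z. m = clo TS z"
    using P by auto
next
  fix H assume "\<not> (\<exists>T\<in>set TS. T \<noteq> hyp_union H T)" "\<forall>m\<in>H. \<exists>z. m = clo TS z"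
  thus "(\<forall>T\<in>set TS. T = hyp_union H T) \<and> (\<forall>m\<in>H. \<exists>z. m = clo TS z)" by auto
next
  show "wf (measure (\<lambda>H. card (Sigma (set TS) (\<lambda>T. T - hyp_union H T))))" by simp
next
  fix H assume P: "\<forall>m\<in>H. \<exists>z. m = clo TS z"
    and b: "\<exists>T\<in>set TS. T \<noteq> hyp_union H T"
  from alg3_step_props[OF fin b] obtain z T0 where
    eq: "alg3_step TS H = insert (clo TS z) H" and T0: "T0 \<in> set TS"
    "z \<in> T0 - hyp_union H T0" "clo TS z \<subseteq> T0" by blast
  have zc: "z \<in> clo TS z" by (auto simp: clo_def)
  let ?S = "\<lambda>H. Sigma (set TS) (\<lambda>T. T - hyp_union H T)"
  have sub: "?S (alg3_step TS H) \<subseteq> ?S H"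
    using hyp_union_mono[of H "alg3_step TS H"] eq by blast
  have "(T0, z) \<in> ?S H" using T0 by blast
  moreover have "(T0, z) \<notin> ?S (alg3_step TS H)"
    using T0(3) zc eq by (auto simp: hyp_union_def)
  ultimately have "?S (alg3_step TS H) \<subset> ?S H" using sub by blast
  moreover have "finite (?S H)" using fin by auto
  ultimately show "(alg3_step TS H, H) \<in> measure (\<lambda>H. card (?S H))"
    by (simp add: psubset_card_mono)
qed


lemma clo_mem: "z \<in> clo TS z" by (auto simp: clo_def)

lemma clo_sub: "T \<in> set TS \<Longrightarrow> z \<in> T \<Longrightarrow> clo TS z \<subseteq> T"
  by (auto simp: clo_def)

lemma clo_app_sub: "clo (TS @ [T]) z \<subseteq> clo TS z"
  by (auto simp: clo_def)

lemma clo_app_notin: "z \<notin> T \<Longrightarrow> clo (TS @ [T]) z = clo TS z"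
  unfolding clo_def by (rule arg_cong[where f=Inter]) auto

lemma clo_app_in: "z \<in> T \<Longrightarrow> clo (TS @ [T]) z = clo TS z \<inter> T"
  by (auto simp: clo_def)

lemma clo_trans: "u \<in> clo TS v \<Longrightarrow> clo TS u \<subseteq> clo TS v"
  by (auto simp: clo_def)

definition cc :: "nat \<Rightarrow> nat set list \<Rightarrow> nat \<Rightarrow> nat" where
  "cc n TS z = (if z \<in> \<Union>(set TS) then card (clo TS z) else Suc n)"

definition Req :: "nat set list \<Rightarrow> nat set \<Rightarrow> bool" where
  "Req TS X = (\<exists>T\<in>set TS. \<exists>v\<in>T. X = clo TS v \<and> (\<forall>w\<in>T. \<not> clo TS v \<subset> clo TS w))"

definition good :: "nat set list \<Rightarrow> nat \<Rightarrow> bool" where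
  "good TS z = (z \<in> \<Union>(set TS) \<and> Req TS (clo TS z))"

definition pp :: "nat \<Rightarrow> nat set \<Rightarrow> nat set list \<Rightarrow> nat \<Rightarrow> nat" where
  "pp n Y TS z = cc n TS z + (if z \<in> Y \<and> \<not> good TS z then 1 else 0)"

definition pot :: "nat \<Rightarrow> nat set \<Rightarrow> nat set list \<Rightarrow> nat" where
  "pot n Y TS = (\<Sum>z<n. pp n Y TS z)"

lemma clo_fin:
  assumes "\<forall>T'\<in>set TS. T' \<subseteq> {..<n}" "z \<in> \<Union>(set TS)"
  shows "clo TS z \<subseteq> {..<n}" "finite (clo TS z)"
proof -
  from assms(2) obtain T' where "T' \<in> set TS" "z \<in> T'" by blast
  thus "clo TS z \<subseteq> {..<n}" using clo_sub assms(1) by blast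
  thus "finite (clo TS z)" using finite_subset by blast
qed

lemma cc_le:
  assumes sub: "\<forall>T'\<in>set TS. T' \<subseteq> {..<n}" "T \<subseteq> {..<n}"
  shows "cc n (TS @ [T]) z \<le> cc n TS z"
    and "cc n (TS @ [T]) z = cc n TS z \<Longrightarrow> clo (TS @ [T]) z = clo TS z \<and>
          (z \<in> \<Union>(set (TS @ [T])) \<longleftrightarrow> z \<in> \<Union>(set TS))"
proof -
  have sub': "\<forall>T'\<in>set (TS @ [T]). T' \<subseteq> {..<n}" using sub by auto
  have A: "cc n (TS @ [T]) z \<le> cc n TS z \<and> (cc n (TS @ [T]) z = cc n TS z \<longrightarrow>
     clo (TS @ [T]) z = clo TS z \<and> (z \<in> \<Union>(set (TS @ [T])) \<longleftrightarrow> z \<in> \<Union>(set TS)))"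
  proof (cases "z \<in> \<Union>(set TS)")
    case True
    hence T': "z \<in> \<Union>(set (TS @ [T]))" by auto
    have f: "finite (clo TS z)" using clo_fin[OF sub(1) True] by blast
    have s: "clo (TS @ [T]) z \<subseteq> clo TS z" by (rule clo_app_sub)
    have "card (clo (TS @ [T]) z) \<le> card (clo TS z)" using f s by (simp add: card_mono)
    moreover have "card (clo (TS @ [T]) z) = card (clo TS z) \<Longrightarrow> clo (TS @ [T]) z = clo TS z"
      using f s card_subset_eq by blast
    ultimately show ?thesis using True T' by (simp add: cc_def)
  next
    case False
    show ?thesis
    proof (cases "z \<in> \<Union>(set (TS @ [T]))")
      case True
      have "clo (TS @ [T]) z \<subseteq> {..<n}" using clo_fin[OF sub' True] by blast
      hence "card (clo (TS @ [T]) z) \<le> n" by (metis card_lessThan card_mono finite_lessThan)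
      thus ?thesis using True False by (simp add: cc_def)
    next
      case F2: False
      have "z \<notin> T" using F2 by auto
      thus ?thesis using False F2 clo_app_notin[of z T TS] by (simp add: cc_def)
    qed
  qed
  show "cc n (TS @ [T]) z \<le> cc n TS z" using A by blast
  show "cc n (TS @ [T]) z = cc n TS z \<Longrightarrow> clo (TS @ [T]) z = clo TS z \<and>
          (z \<in> \<Union>(set (TS @ [T])) \<longleftrightarrow> z \<in> \<Union>(set TS))" using A by blast
qed

lemma good_keep:
  assumes "good TS z" "clo (TS @ [T]) z = clo TS z"
  shows "good (TS @ [T]) z"
proof -
  from assms(1) obtain T0 v where T0: "T0 \<in> set TS" "v \<in> T0" "clo TS z = clo TS v"
    "\<forall>w\<in>T0. \<not> clo TS v \<subset> clo TS w" and zV: "z \<in> \<Union>(set TS)"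
    by (auto simp: good_def Req_def)
  have zT0: "z \<in> T0" using clo_mem[of z TS] T0 clo_sub[OF T0(1,2)] by blast
  have "\<forall>w\<in>T0. \<not> clo (TS @ [T]) z \<subset> clo (TS @ [T]) w"
    using T0(3,4) assms(2) clo_app_sub[of TS T] by blast
  moreover have "T0 \<in> set (TS @ [T])" using T0(1) by simp
  ultimately have "Req (TS @ [T]) (clo (TS @ [T]) z)" unfolding Req_def using zT0 by blast
  thus ?thesis using zV by (auto simp: good_def)
qed

lemma Req_in:
  assumes expl: "\<forall>T'\<in>set TS. T' = hyp_union Mt T'"
    and hyps: "\<forall>m\<in>Mt. \<exists>z. m = clo TS z"
    and R: "Req TS X"
  shows "X \<in> Mt"
proof -
  from R obtain T0 v where T0: "T0 \<in> set TS" "v \<in> T0" "X = clo TS v"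
    "\<forall>w\<in>T0. \<not> clo TS v \<subset> clo TS w" by (auto simp: Req_def)
  have "v \<in> hyp_union Mt T0" using expl T0 by blast
  then obtain m where m: "m \<in> Mt" "m \<subseteq> T0" "v \<in> m" by (auto simp: hyp_union_def)
  obtain u where u: "m = clo TS u" using hyps m by blast
  have "u \<in> T0" using clo_mem[of u TS] u m by blast
  have "clo TS v \<subseteq> clo TS u" using clo_trans m u by blast
  hence "clo TS v = clo TS u" using T0(4) \<open>u \<in> T0\<close> by blast
  thus ?thesis using T0(3) u m by simp
qed


lemma tgt_sub:
  assumes "\<forall>i<k. M i \<subseteq> {..<n}" "\<exists>S\<subseteq>{..<k}. T = \<Union>(M ` S)"
  shows "T \<subseteq> {..<n}"
proof -
  obtain S where S: "S \<subseteq> {..<k}" "T = \<Union>(M ` S)" using assms(2) by blast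
  show ?thesis unfolding S(2) using S(1) assms(1) by auto
qed

lemma step:
  assumes vars: "\<forall>i<k. M i \<subseteq> {..<n}"
    and yprop: "\<forall>i<k. y i \<in> M i \<and> (\<forall>j<k. j \<noteq> i \<longrightarrow> y i \<notin> M j)"
    and tsT: "\<forall>T'\<in>set TS. \<exists>S\<subseteq>{..<k}. T' = \<Union>(M ` S)"
    and tT: "\<exists>S\<subseteq>{..<k}. T = \<Union>(M ` S)"
    and expl: "\<forall>T'\<in>set TS. T' = hyp_union Mt T'"
    and hyps: "\<forall>m\<in>Mt. \<exists>z. m = clo TS z"
    and new: "T \<noteq> hyp_union Mt T"
  shows "pot n (y ` {..<k}) (TS @ [T]) < pot n (y ` {..<k}) TS"
proof -
  define Y where "Y = y ` {..<k}"
  define TS' where "TS' = TS @ [T]"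
  have subT: "T \<subseteq> {..<n}" using tgt_sub[OF vars tT] .
  have subTS: "\<forall>T'\<in>set TS. T' \<subseteq> {..<n}"
  proof
    fix T' assume "T' \<in> set TS"
    thus "T' \<subseteq> {..<n}" using tsT tgt_sub[OF vars, of T'] by blast
  qed
  have subTS': "\<forall>T'\<in>set TS'. T' \<subseteq> {..<n}" using subT subTS by (auto simp: TS'_def)
  have TinTS': "T \<in> set TS'" by (simp add: TS'_def)
  have tsT': "\<forall>T'\<in>set TS'. \<exists>S\<subseteq>{..<k}. T' = \<Union>(M ` S)" using tsT tT by (auto simp: TS'_def)
  note ccle = cc_le[OF subTS subT, folded TS'_def]
  note cloS = clo_app_sub[of TS T, folded TS'_def]
  have card_le_n: "\<And>w. w \<in> T \<Longrightarrow> card (clo TS' w) \<le> n"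
  proof -
    fix w assume "w \<in> T"
    hence "clo TS' w \<subseteq> {..<n}" using clo_sub[OF TinTS'] subT by blast
    thus "card (clo TS' w) \<le> n" by (metis card_lessThan card_mono finite_lessThan)
  qed
  have finT': "\<And>w. w \<in> T \<Longrightarrow> finite (clo TS' w)"
  proof -
    fix w assume "w \<in> T"
    hence "clo TS' w \<subseteq> {..<n}" using clo_sub[OF TinTS'] subT by blast
    thus "finite (clo TS' w)" using finite_subset by blast
  qed
  have le: "\<forall>z\<in>{..<n}. pp n Y TS' z \<le> pp n Y TS z"
  proof
    fix z assume "z \<in> {..<n}"
    have c: "cc n TS' z \<le> cc n TS z" by (rule ccle(1))
    show "pp n Y TS' z \<le> pp n Y TS z"
    proof (cases "z \<in> Y \<and> \<not> good TS' z \<and> good TS z")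
      case True
      have "cc n TS' z \<noteq> cc n TS z"
      proof
        assume "cc n TS' z = cc n TS z"
        hence "clo TS' z = clo TS z" using ccle(2) by blast
        hence "good TS' z" using good_keep True unfolding TS'_def by blast
        thus False using True by blast
      qed
      thus ?thesis using c by (auto simp: pp_def)
    next
      case False
      thus ?thesis using c by (auto simp: pp_def)
    qed
  qed
  have strict: "\<exists>z\<in>{..<n}. pp n Y TS' z < pp n Y TS z"
  proof (cases "\<exists>z<n. cc n TS' z < cc n TS z")
    case True
    show ?thesis
    proof (rule ccontr)
      assume H: "\<not> (\<exists>z\<in>{..<n}. pp n Y TS' z < pp n Y TS z)"
      have lost: "\<And>z. z < n \<Longrightarrow> cc n TS' z < cc n TS z \<Longrightarrow> z \<in> Y \<and> good TS z \<and> \<not> good TS' z"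
      proof -
        fix z assume "z < n" "cc n TS' z < cc n TS z"
        hence "\<not> pp n Y TS' z < pp n Y TS z" using H by auto
        thus "z \<in> Y \<and> good TS z \<and> \<not> good TS' z" using \<open>cc n TS' z < cc n TS z\<close>
          by (auto simp: pp_def split: if_splits)
      qed
      from True obtain z1 where "z1 < n \<and> cc n TS' z1 < cc n TS z1" by blast
      then obtain z0 where z0: "z0 < n \<and> cc n TS' z0 < cc n TS z0"
        and z0max: "\<forall>w. w < n \<and> cc n TS' w < cc n TS w \<longrightarrow> n - card (clo TS' z0) \<le> n - card (clo TS' w)"
        using ex_has_least_nat[of "\<lambda>z. z < n \<and> cc n TS' z < cc n TS z" z1 "\<lambda>z. n - card (clo TS' z)"]
        by blast
      have l0: "z0 \<in> Y" "good TS z0" "\<not> good TS' z0" using lost z0 by auto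
      have z0V: "z0 \<in> \<Union>(set TS)" using l0(2) by (simp add: good_def)
      have z0T: "z0 \<in> T"
      proof (rule ccontr)
        assume "z0 \<notin> T"
        hence "clo TS' z0 = clo TS z0" using clo_app_notin TS'_def by simp
        moreover have "z0 \<in> \<Union>(set TS')" using z0V by (auto simp: TS'_def)
        ultimately have "cc n TS' z0 = cc n TS z0" using z0V by (simp add: cc_def)
        thus False using z0 by simp
      qed
      have z0V': "z0 \<in> \<Union>(set TS')" using z0V by (auto simp: TS'_def)
      have neq: "clo TS' z0 \<noteq> clo TS z0"
      proof
        assume "clo TS' z0 = clo TS z0"
        hence "cc n TS' z0 = cc n TS z0" using z0V z0V' by (simp add: cc_def)
        thus False using z0 by simp
      qed
      have "\<not> (z0 \<in> \<Union>(set TS') \<and> Req TS' (clo TS' z0))" using l0(3) unfolding good_def by assumption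
      hence nR: "\<not> Req TS' (clo TS' z0)" using z0V' by blast
      have "\<exists>w\<in>T. clo TS' z0 \<subset> clo TS' w"
      proof (rule ccontr)
        assume a: "\<not> (\<exists>w\<in>T. clo TS' z0 \<subset> clo TS' w)"
        have "Req TS' (clo TS' z0)" unfolding Req_def
          apply (rule bexI[OF _ TinTS'])
          apply (rule bexI[OF _ z0T])
          using a by simp
        thus False using nR by blast
      qed
      then obtain w where w: "w \<in> T" "clo TS' z0 \<subset> clo TS' w" by blast
      have wn: "w < n" using w(1) subT by blast
      have cw: "cc n TS' w < cc n TS w"
      proof (cases "w \<in> \<Union>(set TS)")
        case False
        have "w \<in> \<Union>(set TS')" using w(1) TinTS' by blast
        thus ?thesis using False card_le_n[OF w(1)] by (simp add: cc_def)
      next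
        case True
        have wV': "w \<in> \<Union>(set TS')" using w(1) TinTS' by blast
        have "z0 \<in> clo TS w" using w(2) cloS clo_mem[of z0 TS'] by blast
        hence s1: "clo TS z0 \<subseteq> clo TS w" by (rule clo_trans)
        have "clo TS' z0 = clo TS z0 \<inter> T" using clo_app_in[OF z0T] TS'_def by simp
        hence "\<not> clo TS z0 \<subseteq> T" using neq by blast
        hence "\<not> clo TS w \<subseteq> T" using s1 by blast
        moreover have "clo TS' w \<subseteq> T" using clo_sub[OF TinTS' w(1)] .
        ultimately have "clo TS' w \<subset> clo TS w" using cloS by blast
        moreover have "finite (clo TS w)" using clo_fin[OF subTS True] by blast
        ultimately have "card (clo TS' w) < card (clo TS w)" by (rule psubset_card_mono[rotated])
        thus ?thesis using True wV' by (simp add: cc_def)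
      qed
      have "n - card (clo TS' z0) \<le> n - card (clo TS' w)" using z0max wn cw by blast
      moreover have "card (clo TS' z0) < card (clo TS' w)"
        using w(2) finT'[OF w(1)] psubset_card_mono by blast
      moreover have "card (clo TS' w) \<le> n" using card_le_n[OF w(1)] .
      ultimately show False by linarith
    qed
  next
    case False
    have ceq: "\<And>z. z < n \<Longrightarrow> cc n TS' z = cc n TS z" using False ccle(1) by (meson le_neq_implies_less)
    have cloeq: "\<And>z. clo TS' z = clo TS z"
    proof -
      fix z show "clo TS' z = clo TS z"
      proof (cases "z < n")
        case True thus ?thesis using ceq ccle(2) by blast
      next
        case False
        hence "z \<notin> T" using subT by auto
        thus ?thesis using clo_app_notin TS'_def by simp
      qed
    qed
    have "\<exists>v\<in>T. v \<notin> hyp_union Mt T" using new hyp_union_sub[of Mt T] by blast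
    then obtain v where v: "v \<in> T" "v \<notin> hyp_union Mt T" by blast
    obtain u where u: "u \<in> T \<and> v \<in> clo TS' u"
      and umax: "\<forall>w. w \<in> T \<and> v \<in> clo TS' w \<longrightarrow> n - card (clo TS' u) \<le> n - card (clo TS' w)"
      using ex_has_least_nat[of "\<lambda>u. u \<in> T \<and> v \<in> clo TS' u" v "\<lambda>u. n - card (clo TS' u)"]
        v(1) clo_mem[of v TS'] by blast
    have umax2: "\<forall>w\<in>T. \<not> clo TS' u \<subset> clo TS' w"
    proof (intro ballI notI)
      fix w assume w: "w \<in> T" "clo TS' u \<subset> clo TS' w"
      hence "v \<in> clo TS' w" using u by blast
      hence "n - card (clo TS' u) \<le> n - card (clo TS' w)" using umax w(1) by blast
      moreover have "card (clo TS' u) < card (clo TS' w)"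
        using w(2) finT'[OF w(1)] psubset_card_mono by blast
      moreover have "card (clo TS' w) \<le> n" using card_le_n[OF w(1)] .
      ultimately show False by linarith
    qed
    obtain S where S: "S \<subseteq> {..<k}" "T = \<Union>(M ` S)" using tT by blast
    have uU: "u \<in> \<Union>(M ` S)" using u S(2) by simp
    then obtain j where j: "j \<in> S" "u \<in> M j" by blast
    have jk: "j < k" using j(1) S(1) by blast
    note yj = yprop[rule_format, OF jk]
    have "y j \<in> \<Union>(M ` S)" using yj j(1) by blast
    hence yjT: "y j \<in> T" using S(2) by simp
    have Mj: "M j \<subseteq> clo TS' (y j)"
    proof -
      have "\<forall>T''\<in>set TS'. y j \<in> T'' \<longrightarrow> M j \<subseteq> T''"
      proof (intro ballI impI)
        fix T'' assume "T'' \<in> set TS'" "y j \<in> T''"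
        have "\<exists>S''\<subseteq>{..<k}. T'' = \<Union>(M ` S'')" using tsT' \<open>T'' \<in> set TS'\<close> by (rule bspec)
        then obtain S'' where S'': "S'' \<subseteq> {..<k}" "T'' = \<Union>(M ` S'')" by (elim exE conjE)
        have "y j \<in> \<Union>(M ` S'')" using S''(2) \<open>y j \<in> T''\<close> by simp
        then obtain l where l: "l \<in> S''" "y j \<in> M l" by blast
        have nl: "\<forall>l'<k. l' \<noteq> j \<longrightarrow> y j \<notin> M l'" using yj by (rule conjunct2)
        have "l < k" using l(1) S''(1) by blast
        hence "l = j" using nl l(2) by blast
        hence "M j \<subseteq> \<Union>(M ` S'')" using l(1) by blast
        thus "M j \<subseteq> T''" using S''(2) by simp
      qed
      thus ?thesis by (auto simp: clo_def)
    qed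
    have s1: "clo TS' u \<subseteq> clo TS' (y j)" by (rule clo_trans) (use Mj j(2) in blast)
    have "\<not> clo TS' u \<subset> clo TS' (y j)" using umax2 yjT by blast
    hence cu: "clo TS' u = clo TS' (y j)" using s1 unfolding psubset_eq by blast
    have um3: "\<forall>w\<in>T. \<not> clo TS' (y j) \<subset> clo TS' w" using umax2 cu by simp
    have "Req TS' (clo TS' (y j))" unfolding Req_def
      apply (rule bexI[OF _ TinTS'])
      apply (rule bexI[OF _ yjT])
      using um3 by simp
    moreover have "y j \<in> \<Union>(set TS')" using yjT TinTS' by blast
    ultimately have g': "good TS' (y j)" by (simp add: good_def)
    have ng: "\<not> good TS (y j)"
    proof
      assume "good TS (y j)"
      hence "Req TS (clo TS (y j))" by (simp add: good_def)
      hence "clo TS (y j) \<in> Mt" using Req_in[OF expl hyps] by blast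
      moreover have "clo TS (y j) \<subseteq> T" using cloeq clo_sub[OF TinTS' yjT] by simp
      moreover have "v \<in> clo TS (y j)" using cloeq cu u by simp
      ultimately have "v \<in> hyp_union Mt T" by (auto simp: hyp_union_def)
      thus False using v by blast
    qed
    have "y j \<in> Y" using jk Y_def by blast
    moreover have "y j < n" using yjT subT by blast
    ultimately have "pp n Y TS' (y j) < pp n Y TS (y j)"
      using g' ng ccle(1)[of "y j"] by (simp add: pp_def)
    thus ?thesis using \<open>y j < n\<close> by blast
  qed
  have "pot n Y TS' < pot n Y TS"
    unfolding pot_def by (rule sum_strict_mono_ex1[OF _ le strict]) simp
  thus ?thesis unfolding Y_def TS'_def .
qed


definition INV :: "(nat \<Rightarrow> nat set) \<Rightarrow> nat \<Rightarrow> nat \<Rightarrow> nat set \<Rightarrow> nat \<Rightarrow> nat set list \<times> nat set set \<Rightarrow> bool" where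
  "INV M k n Y B st = ((\<forall>T'\<in>set (fst st). \<exists>S\<subseteq>{..<k}. T' = \<Union>(M ` S)) \<and>
      (\<forall>T'\<in>set (fst st). T' = hyp_union (snd st) T') \<and>
      (\<forall>m\<in>snd st. \<exists>z. m = clo (fst st) z) \<and> length (fst st) + pot n Y (fst st) \<le> B)"

lemma round_inv:
  assumes vars: "\<forall>i<k. M i \<subseteq> {..<n}"
    and yprop: "\<forall>i<k. y i \<in> M i \<and> (\<forall>j<k. j \<noteq> i \<longrightarrow> y i \<notin> M j)"
    and I: "INV M k n (y ` {..<k}) B st"
    and tT: "\<exists>S\<subseteq>{..<k}. T = \<Union>(M ` S)"
  shows "INV M k n (y ` {..<k}) B (alg4_round st T)"
proof -
  obtain TS Mt where st: "st = (TS, Mt)" by (cases st)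
  have I1: "\<forall>T'\<in>set TS. \<exists>S\<subseteq>{..<k}. T' = \<Union>(M ` S)"
    and I2: "\<forall>T'\<in>set TS. T' = hyp_union Mt T'"
    and I3: "\<forall>m\<in>Mt. \<exists>z. m = clo TS z"
    and I4: "length TS + pot n (y ` {..<k}) TS \<le> B"
    using I unfolding INV_def st by auto
  show ?thesis
  proof (cases "T \<noteq> hyp_union Mt T")
    case True
    have r: "alg4_round st T = (TS @ [T], alg3 (TS @ [T]))"
      using True by (simp add: alg4_round_def st)
    have lt: "pot n (y ` {..<k}) (TS @ [T]) < pot n (y ` {..<k}) TS"
      by (rule step[OF vars yprop I1 tT I2 I3 True])
    have J1: "\<forall>T'\<in>set (TS @ [T]). \<exists>S\<subseteq>{..<k}. T' = \<Union>(M ` S)" using I1 tT by auto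
    have "\<forall>T'\<in>set (TS @ [T]). T' \<subseteq> {..<n}"
    proof
      fix T' assume "T' \<in> set (TS @ [T])"
      thus "T' \<subseteq> {..<n}" using J1 tgt_sub[OF vars, of T'] by blast
    qed
    hence "\<forall>T'\<in>set (TS @ [T]). finite T'" using finite_subset by blast
    note A = alg3_props[OF this]
    show ?thesis unfolding r INV_def using J1 A I4 lt by auto
  next
    case False
    hence "alg4_round st T = st" by (simp add: alg4_round_def st)
    thus ?thesis using I by simp
  qed
qed

lemma fold_inv:
  assumes vars: "\<forall>i<k. M i \<subseteq> {..<n}"
    and yprop: "\<forall>i<k. y i \<in> M i \<and> (\<forall>j<k. j \<noteq> i \<longrightarrow> y i \<notin> M j)"
  shows "INV M k n (y ` {..<k}) B st \<Longrightarrow> \<forall>T\<in>set xs. \<exists>S\<subseteq>{..<k}. T = \<Union>(M ` S) \<Longrightarrow>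
    INV M k n (y ` {..<k}) B (foldl alg4_round st xs)"
proof (induction xs arbitrary: st)
  case Nil thus ?case by simp
next
  case (Cons a xs)
  have "INV M k n (y ` {..<k}) B (alg4_round st a)"
    using round_inv[OF vars yprop Cons.prems(1)] Cons.prems(2) by simp
  thus ?case using Cons.IH Cons.prems(2) by simp
qed

lemma pot_ge:
  assumes "\<forall>T'\<in>set TS. T' \<subseteq> {..<n}"
  shows "n \<le> pot n Y TS"
proof -
  have "\<forall>z\<in>{..<n}. 1 \<le> pp n Y TS z"
  proof
    fix z assume "z \<in> {..<n}"
    have "1 \<le> cc n TS z"
    proof (cases "z \<in> \<Union>(set TS)")
      case True
      have "finite (clo TS z)" using clo_fin[OF assms True] by blast
      hence "clo TS z \<noteq> {} \<Longrightarrow> 1 \<le> card (clo TS z)"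
        by (simp add: Suc_leI card_gt_0_iff)
      thus ?thesis using True clo_mem[of z TS] by (auto simp: cc_def)
    qed (simp add: cc_def)
    thus "1 \<le> pp n Y TS z" by (simp add: pp_def)
  qed
  hence "(\<Sum>z<n. (1::nat)) \<le> pot n Y TS" unfolding pot_def by (intro sum_mono) auto
  thus ?thesis by simp
qed

lemma pot_init: assumes "finite Y" shows "pot n Y [] \<le> n * Suc n + card Y"
proof -
  have "pot n Y [] \<le> (\<Sum>z<n. Suc n + (if z \<in> Y then 1 else 0))"
    unfolding pot_def by (rule sum_mono) (simp add: pp_def cc_def good_def)
  also have "\<dots> = (\<Sum>z<n. Suc n) + (\<Sum>z<n. (if z \<in> Y then 1 else 0))"
    by (rule sum.distrib)
  also have "(\<Sum>z<n. (if z \<in> Y then 1 else 0)) = card ({..<n} \<inter> Y)"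
    by (simp add: sum.If_cases)
  also have "card ({..<n} \<inter> Y) \<le> card Y" using assms by (simp add: card_mono)
  finally show ?thesis by simp
qed

theorem theorem3:
  fixes n k :: nat and M :: "nat \<Rightarrow> nat set" and Ts :: "nat set list"
  assumes vars: "\<forall>i<k. M i \<subseteq> {..<n}"
    and anchor: "anchor_condition M k"
    and targets: "\<forall>T\<in>set Ts. \<exists>S\<subseteq>{..<k}. T = \<Union>(M ` S)"
  shows "length (fst (alg4 Ts)) \<le> n ^ 2 + k"
proof -
  have "\<forall>i. \<exists>yi. i < k \<longrightarrow> yi \<in> M i \<and> (\<forall>j<k. j \<noteq> i \<longrightarrow> yi \<notin> M j)"
    using anchor unfolding anchor_condition_def by blast
  then obtain y where "\<forall>i. i < k \<longrightarrow> y i \<in> M i \<and> (\<forall>j<k. j \<noteq> i \<longrightarrow> y i \<notin> M j)"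
    by metis
  hence yprop: "\<forall>i<k. y i \<in> M i \<and> (\<forall>j<k. j \<noteq> i \<longrightarrow> y i \<notin> M j)" by blast
  define B where "B = n * Suc n + k"
  have cY: "card (y ` {..<k}) \<le> k" using card_image_le[of "{..<k}" y] by simp
  have "pot n (y ` {..<k}) [] \<le> n * Suc n + card (y ` {..<k})" by (rule pot_init) simp
  hence "INV M k n (y ` {..<k}) B ([], {})" unfolding INV_def B_def using cY by simp
  hence I: "INV M k n (y ` {..<k}) B (alg4 Ts)"
    unfolding alg4_def using fold_inv[OF vars yprop] targets by blast
  define TS where "TS = fst (alg4 Ts)"
  have I1: "\<forall>T'\<in>set TS. \<exists>S\<subseteq>{..<k}. T' = \<Union>(M ` S)"
    and I4: "length TS + pot n (y ` {..<k}) TS \<le> B" using I unfolding INV_def TS_def by auto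
  have "\<forall>T'\<in>set TS. T' \<subseteq> {..<n}"
  proof
    fix T' assume "T' \<in> set TS"
    thus "T' \<subseteq> {..<n}" using I1 tgt_sub[OF vars, of T'] by blast
  qed
  hence "n \<le> pot n (y ` {..<k}) TS" by (rule pot_ge)
  hence "length TS \<le> n * n + k" using I4 unfolding B_def by simp
  thus ?thesis unfolding TS_def by (simp add: power2_eq_square)
qed

end
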